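(* Uniformly in any linear ordering $R=(A,<_R)$ (with $A\subseteq\mathbb{N}$), one may compute a tree $T_R\subseteq2^{<\omega}$ and a labeling function $l_R:A\to T_R$ such that: (1) for each $\sigma\in T_R$, the last bit of $\sigma$ is $0$ if and only if $\sigma=l_R(a)$ for some $a\in A$; (2) for each $a\in A$, $l_R(a)^\frown\overline1\in[T_R]$; (3) for each $a,b\in A$, $a<_R b$ if and only if $l_R(a)^\frown\overline1<l_R(b)^\frown\overline1$; (4) if $X\in[T_R]$, then $X=l_R(a)^\frown\overline1$ for some $a\in A$ if and only if $X$ has a successor (an immediate successor in the order) in $[T_R]$; (5) the order type of $[T_R]$ depends only on the order type of $R$; (6) two linear orders $R$ and $S$ are isomorphic if and only if $[T_R]$ and $[T_S]$ are order isomorphic.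
   Context: A tree is a subset of $2^{<\omega}$ (finite binary strings) closed under initial segments; $[T]$ is the set of $X\in2^\omega$ all of whose finite initial segments lie in $T$, ordered lexicographically: $X<Y$ iff $X\neq Y$ and $X(n)<Y(n)$ at the first $n$ where they differ. For a finite string $\sigma$, $\sigma^\frown\overline1$ is the infinite sequence consisting of $\sigma$ followed by all $1$'s. A linear ordering $R=(A,<_R)$ is given by its code $\{\langle a,b\rangle: a,b\in A,\ a<_R b\}\subseteq\mathbb{N}$; "uniformly compute" means a single oracle algorithm computes (the codes of) $T_R$ and $l_R$ from the code of $R$. *)

theory Defs
  imports Main "HOL-Library.Nat_Bijection"
begin

datatype recf =
    Zero
  | Succ
  | Proj nat
  | Orc
  | Comp recf "recf list"
  | Prec recf recf
  | Mn recf

inductive eval :: "(nat \<Rightarrow> nat) \<Rightarrow> recf \<Rightarrow> nat list \<Rightarrow> nat \<Rightarrow> bool" for X where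
  eval_Zero: "eval X Zero xs 0"
| eval_Succ: "eval X Succ (x # xs) (Suc x)"
| eval_Proj: "i < length xs \<Longrightarrow> eval X (Proj i) xs (xs ! i)"
| eval_Orc: "eval X Orc (x # xs) (X x)"
| eval_Comp: "length ys = length gs \<Longrightarrow> (\<forall>i < length gs. eval X (gs ! i) xs (ys ! i))
      \<Longrightarrow> eval X f ys z \<Longrightarrow> eval X (Comp f gs) xs z"
| eval_Prec0: "eval X f xs y \<Longrightarrow> eval X (Prec f g) (0 # xs) y"
| eval_PrecS: "eval X (Prec f g) (n # xs) y \<Longrightarrow> eval X g (y # n # xs) z
      \<Longrightarrow> eval X (Prec f g) (Suc n # xs) z"
| eval_Mn: "eval X f (n # xs) 0 \<Longrightarrow> (\<forall>m < n. \<exists>y. y \<noteq> 0 \<and> eval X f (m # xs) y)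
      \<Longrightarrow> eval X (Mn f) xs n"

definition computes_set :: "(nat \<Rightarrow> nat) \<Rightarrow> recf \<Rightarrow> nat set \<Rightarrow> bool" where
  "computes_set X e S \<longleftrightarrow> (\<forall>n. (n \<in> S \<longrightarrow> eval X e [n] 1) \<and> (n \<notin> S \<longrightarrow> eval X e [n] 0))"

definition computes_fun_on :: "(nat \<Rightarrow> nat) \<Rightarrow> recf \<Rightarrow> nat set \<Rightarrow> (nat \<Rightarrow> nat) \<Rightarrow> bool" where
  "computes_fun_on X e A g \<longleftrightarrow> (\<forall>a \<in> A. eval X e [a] (g a))"

text \<open>Finite binary strings are bool lists (False = 0, True = 1), coded bijectively
  by bijective base-2 numeration.\<close>
fun bin_code :: "bool list \<Rightarrow> nat" where
  "bin_code [] = 0"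
| "bin_code (b # bs) = 2 * bin_code bs + (if b then 2 else 1)"

definition is_tree :: "bool list set \<Rightarrow> bool" where
  "is_tree T \<longleftrightarrow> (\<forall>\<sigma> \<tau>. \<sigma> @ \<tau> \<in> T \<longrightarrow> \<sigma> \<in> T)"

definition paths :: "bool list set \<Rightarrow> (nat \<Rightarrow> bool) set" where
  "paths T = {X. \<forall>n. map X [0..<n] \<in> T}"

definition lexless :: "(nat \<Rightarrow> bool) \<Rightarrow> (nat \<Rightarrow> bool) \<Rightarrow> bool" where
  "lexless X Y \<longleftrightarrow> (\<exists>n. (\<forall>m<n. X m = Y m) \<and> \<not> X n \<and> Y n)"

definition lex_rel :: "((nat \<Rightarrow> bool) \<times> (nat \<Rightarrow> bool)) set" where
  "lex_rel = {(X, Y). lexless X Y}"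

definition ext_ones :: "bool list \<Rightarrow> nat \<Rightarrow> bool" where
  "ext_ones \<sigma> = (\<lambda>n. if n < length \<sigma> then \<sigma> ! n else True)"

definition strict_lin_order_on :: "nat set \<Rightarrow> (nat \<times> nat) set \<Rightarrow> bool" where
  "strict_lin_order_on A r \<longleftrightarrow> r \<subseteq> A \<times> A
     \<and> (\<forall>a. (a, a) \<notin> r)
     \<and> (\<forall>a b c. (a, b) \<in> r \<longrightarrow> (b, c) \<in> r \<longrightarrow> (a, c) \<in> r)
     \<and> (\<forall>a \<in> A. \<forall>b \<in> A. a \<noteq> b \<longrightarrow> (a, b) \<in> r \<or> (b, a) \<in> r)"

definition order_code :: "(nat \<times> nat) set \<Rightarrow> nat set" where
  "order_code r = {prod_encode (a, b) | a b. (a, b) \<in> r}"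

text \<open>Oracle presenting R = (A,<_R): the join of A and the code of <_R
  (even positions: A; odd positions: the code), as a 0/1 function.\<close>
definition order_oracle :: "nat set \<Rightarrow> (nat \<times> nat) set \<Rightarrow> nat \<Rightarrow> nat" where
  "order_oracle A r n =
     (if even n then (if n div 2 \<in> A then 1 else 0)
      else (if n div 2 \<in> order_code r then 1 else 0))"

definition ord_iso :: "'a set \<Rightarrow> ('a \<times> 'a) set \<Rightarrow> 'b set \<Rightarrow> ('b \<times> 'b) set \<Rightarrow> bool" where
  "ord_iso A r B s \<longleftrightarrow> (\<exists>f. bij_betw f A B \<and> (\<forall>x \<in> A. \<forall>y \<in> A. (x, y) \<in> r \<longleftrightarrow> (f x, f y) \<in> s))"

definition treeR :: "recf \<Rightarrow> (nat \<Rightarrow> nat) \<Rightarrow> bool list set" where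
  "treeR eT X = {\<sigma>. eval X eT [bin_code \<sigma>] 1}"

definition labR :: "recf \<Rightarrow> (nat \<Rightarrow> nat) \<Rightarrow> nat \<Rightarrow> bool list" where
  "labR el X a = (THE \<sigma>. eval X el [a] (bin_code \<sigma>))"

end

theory Submission
  imports Defs
begin

definition Zf :: "nat set \<Rightarrow> (nat \<times> nat) set \<Rightarrow> (nat \<Rightarrow> bool) \<Rightarrow> nat \<Rightarrow> bool" where
  "Zf A r f n \<longleftrightarrow> n \<in> A \<and> (\<forall>m<n. m \<in> A \<longrightarrow> (\<not> f m \<longrightarrow> (n, m) \<in> r)
      \<and> (f m \<longrightarrow> (m, n) \<in> r \<or> (\<exists>m'<m. \<not> f m' \<and> (m', m) \<in> r)))"

definition TT :: "nat set \<Rightarrow> (nat \<times> nat) set \<Rightarrow> bool list set" where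
  "TT A r = {\<sigma>. \<forall>n<length \<sigma>. \<not> \<sigma> ! n \<longrightarrow> Zf A r (nth \<sigma>) n}"

definition cuts :: "nat set \<Rightarrow> (nat \<times> nat) set \<Rightarrow> nat set set" where
  "cuts A r = {L. L \<subseteq> A \<and> (\<forall>x\<in>L. \<forall>y\<in>A. (y, x) \<in> r \<longrightarrow> y \<in> L)}"

definition cutpath :: "nat set \<Rightarrow> (nat \<times> nat) set \<Rightarrow> nat set \<Rightarrow> nat \<Rightarrow> bool" where
  "cutpath A r L n \<longleftrightarrow> \<not> (n \<in> A \<and> n \<notin> L \<and> (\<forall>m<n. m \<in> A \<longrightarrow> m \<notin> L \<longrightarrow> (n, m) \<in> r))"

definition below :: "(nat \<times> nat) set \<Rightarrow> nat \<Rightarrow> nat set" where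
  "below r a = {x. (x, a) \<in> r}"

definition lab :: "nat set \<Rightarrow> (nat \<times> nat) set \<Rightarrow> nat \<Rightarrow> bool list" where
  "lab A r a = map (cutpath A r (below r a)) [0..<Suc a]"

definition has_succ :: "(nat \<Rightarrow> bool) set \<Rightarrow> (nat \<Rightarrow> bool) \<Rightarrow> bool" where
  "has_succ P Y \<longleftrightarrow> (\<exists>Z\<in>P. lexless Y Z \<and> \<not> (\<exists>W\<in>P. lexless Y W \<and> lexless W Z))"

definition Succs :: "(nat \<Rightarrow> bool) set \<Rightarrow> (nat \<Rightarrow> bool) set" where
  "Succs P = {Y\<in>P. has_succ P Y}"

definition psub :: "nat set rel" where "psub = {(L, L'). L \<subset> L'}"

lemma Zf_cong: assumes H: "\<And>m. m < n \<Longrightarrow> f m = g m" shows "Zf A r f n = Zf A r g n"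
proof -
  have "(\<exists>m'<m. \<not> f m' \<and> (m', m) \<in> r) = (\<exists>m'<m. \<not> g m' \<and> (m', m) \<in> r)" if "m < n" for m
    using H that by (meson less_trans)
  then show ?thesis unfolding Zf_def using H by (auto cong: conj_cong)
qed

lemma lexless_irrefl: "\<not> lexless X X"
  unfolding lexless_def by auto

lemma lexless_asym: "lexless X Y \<Longrightarrow> \<not> lexless Y X"
  unfolding lexless_def by (metis linorder_neqE_nat)

lemma ext_ones_less: "n < length \<sigma> \<Longrightarrow> ext_ones \<sigma> n = \<sigma> ! n"
  unfolding ext_ones_def by simp

lemma ext_ones_ge: "length \<sigma> \<le> n \<Longrightarrow> ext_ones \<sigma> n"
  unfolding ext_ones_def by simp

locale lin =
  fixes A :: "nat set" and r :: "(nat \<times> nat) set"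
  assumes lo: "strict_lin_order_on A r"
begin

lemma sub: "(a, b) \<in> r \<Longrightarrow> a \<in> A \<and> b \<in> A"
  using lo unfolding strict_lin_order_on_def by auto
lemma irr: "(a, a) \<notin> r"
  using lo unfolding strict_lin_order_on_def by auto
lemma tr: "(a, b) \<in> r \<Longrightarrow> (b, c) \<in> r \<Longrightarrow> (a, c) \<in> r"
  using lo unfolding strict_lin_order_on_def by blast
lemma tot: "a \<in> A \<Longrightarrow> b \<in> A \<Longrightarrow> a \<noteq> b \<Longrightarrow> (a, b) \<in> r \<or> (b, a) \<in> r"
  using lo unfolding strict_lin_order_on_def by blast
lemma asy: "(a, b) \<in> r \<Longrightarrow> (b, a) \<notin> r"
  using tr irr by blast

abbreviation "Z \<equiv> Zf A r"
abbreviation "T \<equiv> TT A r"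
abbreviation "C \<equiv> cuts A r"
abbreviation "cp \<equiv> cutpath A r"

lemma paths_T: "paths T = {X. \<forall>n. \<not> X n \<longrightarrow> Z X n}"
proof (intro set_eqI iffI; simp)
  fix X assume "X \<in> paths T"
  then have P: "\<And>k. map X [0..<k] \<in> T" unfolding paths_def by auto
  show "\<forall>n. \<not> X n \<longrightarrow> Z X n"
  proof (intro allI impI)
    fix n assume "\<not> X n"
    have "\<forall>k<length (map X [0..<Suc n]). \<not> map X [0..<Suc n] ! k \<longrightarrow> Z (nth (map X [0..<Suc n])) k"
      using P[of "Suc n"] unfolding TT_def by blast
    then have "Z (nth (map X [0..<Suc n])) n" using \<open>\<not> X n\<close> by (simp del: upt_Suc)
    moreover have "Z (nth (map X [0..<Suc n])) n = Z X n" by (rule Zf_cong) (simp del: upt_Suc)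
    ultimately show "Z X n" by simp
  qed
next
  fix X assume H: "\<forall>n. \<not> X n \<longrightarrow> Z X n"
  show "X \<in> paths T" unfolding paths_def TT_def
  proof (clarsimp)
    fix k n assume "n < k" "\<not> X n"
    with H have "Z X n" by auto
    then show "Z (nth (map X [0..<k])) n" using \<open>n < k\<close> by (subst Zf_cong[where g = X]) auto
  qed
qed

lemma path_D: "X \<in> paths T \<Longrightarrow> \<not> X n \<Longrightarrow> Z X n"
  using paths_T by auto

lemma tree: "is_tree T"
  unfolding is_tree_def TT_def
proof (clarsimp)
  fix \<sigma> \<tau> n assume H: "\<forall>n<length \<sigma> + length \<tau>. \<not> (\<sigma> @ \<tau>) ! n \<longrightarrow> Z (nth (\<sigma> @ \<tau>)) n"
    and n: "n < length \<sigma>" "\<not> \<sigma> ! n"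
  then have "Z (nth (\<sigma> @ \<tau>)) n" by (auto simp: nth_append)
  then show "Z (nth \<sigma>) n" using n by (subst (asm) Zf_cong[where g = "nth \<sigma>"]) (auto simp: nth_append)
qed

lemma ext_ones_path: "\<sigma> \<in> T \<Longrightarrow> ext_ones \<sigma> \<in> paths T"
  unfolding paths_T
proof (clarsimp)
  fix n assume s: "\<sigma> \<in> T" and n: "\<not> ext_ones \<sigma> n"
  then have nl: "n < length \<sigma>" using ext_ones_ge by (metis not_le)
  with n s have "Z (nth \<sigma>) n" unfolding TT_def by (auto simp: ext_ones_less)
  then show "Z (ext_ones \<sigma>) n" using nl by (subst Zf_cong[where g = "nth \<sigma>"]) (auto simp: ext_ones_less)
qed

lemma prefix_T: "X \<in> paths T \<Longrightarrow> map X [0..<k] \<in> T"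
  unfolding paths_def by auto

lemma cut_below: "L \<in> C \<Longrightarrow> x \<in> L \<Longrightarrow> a \<in> A \<Longrightarrow> a \<notin> L \<Longrightarrow> (x, a) \<in> r"
proof -
  assume L: "L \<in> C" and x: "x \<in> L" and a: "a \<in> A" "a \<notin> L"
  have xA: "x \<in> A" using L x unfolding cuts_def by auto
  have "x \<noteq> a" using x a by auto
  moreover have "(a, x) \<notin> r" using L x a unfolding cuts_def by auto
  ultimately show ?thesis using tot[OF xA a(1)] by auto
qed

lemma cut_lin: "L \<in> C \<Longrightarrow> L' \<in> C \<Longrightarrow> L \<subseteq> L' \<or> L' \<subseteq> L"
proof (rule ccontr)
  assume L: "L \<in> C" and L': "L' \<in> C" and n: "\<not> (L \<subseteq> L' \<or> L' \<subseteq> L)"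
  then obtain x y where xy: "x \<in> L" "x \<notin> L'" "y \<in> L'" "y \<notin> L" by auto
  have "x \<in> A" "y \<in> A" using xy L L' unfolding cuts_def by auto
  have "(x, y) \<in> r" using cut_below[OF L xy(1) \<open>y \<in> A\<close> xy(4)] .
  moreover have "(y, x) \<in> r" using cut_below[OF L' xy(3) \<open>x \<in> A\<close> xy(2)] .
  ultimately show False using asy by auto
qed

lemma cp_aux: "L \<in> C \<Longrightarrow> m \<in> A \<Longrightarrow> m \<notin> L \<Longrightarrow> cp L m \<Longrightarrow> \<exists>m'<m. \<not> cp L m' \<and> (m', m) \<in> r"
proof (induction m rule: less_induct)
  case (less m)
  from less.prems obtain k where k: "k < m" "k \<in> A" "k \<notin> L" "(m, k) \<notin> r"
    unfolding cutpath_def by auto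
  then have km: "(k, m) \<in> r" using tot[of k m] less.prems by auto
  show ?case
  proof (cases "cp L k")
    case False then show ?thesis using k km by auto
  next
    case True
    with less.IH[OF k(1) less.prems(1) k(2,3)] obtain m' where "m' < k" "\<not> cp L m'" "(m', k) \<in> r" by auto
    then show ?thesis using k km tr by (meson less_trans)
  qed
qed

lemma cp_path: "L \<in> C \<Longrightarrow> cp L \<in> paths T"
  unfolding paths_T
proof (clarsimp)
  fix n assume L: "L \<in> C" and n: "\<not> cp L n"
  then have nA: "n \<in> A" and nL: "n \<notin> L" and H: "\<forall>m<n. m \<in> A \<longrightarrow> m \<notin> L \<longrightarrow> (n, m) \<in> r"
    unfolding cutpath_def by auto
  show "Z (cp L) n" unfolding Zf_def
  proof (intro conjI nA allI impI)
    fix m assume m: "m < n" "m \<in> A"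
    show "\<not> cp L m \<Longrightarrow> (n, m) \<in> r" using H m unfolding cutpath_def by auto
    assume c: "cp L m"
    show "(m, n) \<in> r \<or> (\<exists>m'<m. \<not> cp L m' \<and> (m', m) \<in> r)"
    proof (cases "m \<in> L")
      case True then show ?thesis using cut_below[OF L True nA nL] by auto
    next
      case False then show ?thesis using cp_aux[OF L m(2) False c] by auto
    qed
  qed
qed

definition Lof :: "(nat \<Rightarrow> bool) \<Rightarrow> nat set" where
  "Lof X = {a \<in> A. \<forall>n. \<not> X n \<longrightarrow> (a, n) \<in> r}"

lemma Lof_cut: "Lof X \<in> C"
  unfolding cuts_def Lof_def using tr by blast

lemma zeros_dec: "X \<in> paths T \<Longrightarrow> \<not> X m \<Longrightarrow> \<not> X n \<Longrightarrow> m < n \<Longrightarrow> (n, m) \<in> r"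
  using path_D[of X n] path_D[of X m] unfolding Zf_def by auto

lemma path_eq: assumes P: "X \<in> paths T" shows "X = cp (Lof X)"
proof
  fix n
  have Zs: "\<And>k. \<not> X k \<Longrightarrow> Z X k" using path_D[OF P] by auto
  have ZA: "\<And>k. \<not> X k \<Longrightarrow> k \<in> A" using Zs unfolding Zf_def by auto
  have "(\<not> X n) \<longleftrightarrow> (n \<in> A \<and> n \<notin> Lof X \<and> (\<forall>m<n. m \<in> A \<longrightarrow> m \<notin> Lof X \<longrightarrow> (n, m) \<in> r))"
  proof
    assume Xn: "\<not> X n"
    have Zn: "Z X n" using Zs Xn by auto
    have nA: "n \<in> A" using ZA Xn by auto
    have nL: "n \<notin> Lof X" using Xn irr unfolding Lof_def by auto
    have "(n, m) \<in> r" if m: "m < n" "m \<in> A" "m \<notin> Lof X" for m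
    proof -
      from m obtain z where z: "\<not> X z" "(m, z) \<notin> r" unfolding Lof_def by auto
      show ?thesis
      proof (cases "X m")
        case False then show ?thesis using Zn m unfolding Zf_def by auto
      next
        case True
        with Zn m have D: "(m, n) \<in> r \<or> (\<exists>m'<m. \<not> X m' \<and> (m', m) \<in> r)" unfolding Zf_def by auto
        show ?thesis
        proof (cases "\<exists>m'<m. \<not> X m' \<and> (m', m) \<in> r")
          case True
          then obtain m' where "m' < m" "\<not> X m'" "(m', m) \<in> r" by auto
          with zeros_dec[OF P, of m' n] Xn m(1) show ?thesis using tr by auto
        next
          case False
          with D have mn: "(m, n) \<in> r" by auto
          have zA: "z \<in> A" using ZA z by auto
          have "m \<noteq> z" using True z by auto
          then have zm: "(z, m) \<in> r" using tot[OF m(2) zA] z by auto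
          consider "z = n" | "z < n" | "n < z" by arith
          then show ?thesis
          proof cases
            case 1 then show ?thesis using zm mn asy by auto
          next
            case 2 then have "(n, z) \<in> r" using zeros_dec[OF P z(1) Xn] by auto
            then show ?thesis using zm mn tr irr by blast
          next
            case 3
            have "Z X z" using Zs z by auto
            then have "(m, z) \<in> r \<or> (\<exists>m'<m. \<not> X m' \<and> (m', m) \<in> r)"
              using True m 3 unfolding Zf_def by auto
            then show ?thesis using z False by auto
          qed
        qed
      qed
    qed
    then show "n \<in> A \<and> n \<notin> Lof X \<and> (\<forall>m<n. m \<in> A \<longrightarrow> m \<notin> Lof X \<longrightarrow> (n, m) \<in> r)"
      using nA nL by auto
  next
    assume H: "n \<in> A \<and> n \<notin> Lof X \<and> (\<forall>m<n. m \<in> A \<longrightarrow> m \<notin> Lof X \<longrightarrow> (n, m) \<in> r)"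
    show "\<not> X n"
    proof
      assume Xn: "X n"
      from H obtain z where z: "\<not> X z" "(n, z) \<notin> r" unfolding Lof_def by auto
      have zA: "z \<in> A" using ZA z by auto
      have "z \<noteq> n" using Xn z by auto
      then have zn: "(z, n) \<in> r" using tot[OF zA] H z by auto
      have zL: "z \<notin> Lof X" using z irr unfolding Lof_def by auto
      consider "z < n" | "n < z" using \<open>z \<noteq> n\<close> by arith
      then show False
      proof cases
        case 1 then show False using H zA zL zn asy by auto
      next
        case 2
        have "Z X z" using Zs z by auto
        then have "(n, z) \<in> r \<or> (\<exists>m'<n. \<not> X m' \<and> (m', n) \<in> r)"
          using Xn H 2 unfolding Zf_def by auto
        then obtain m' where m': "m' < n" "\<not> X m'" "(m', n) \<in> r" using z by auto
        have "m' \<notin> Lof X" using m' irr unfolding Lof_def by auto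
        then have "(n, m') \<in> r" using H m' ZA by auto
        then show False using m' asy by auto
      qed
    qed
  qed
  then show "X n = cp (Lof X) n" unfolding cutpath_def by auto
qed

lemma paths_eq: "paths T = cp ` C"
  using cp_path path_eq Lof_cut by blast

lemma cut_order: assumes L: "L \<in> C" and L': "L' \<in> C" and sub: "L \<subset> L'"
  shows "lexless (cp L) (cp L')"
proof -
  define n where "n = (LEAST k. k \<in> L' - L)"
  have ex: "\<exists>k. k \<in> L' - L" using sub by auto
  have n: "n \<in> L'" "n \<notin> L" using LeastI_ex[OF ex] unfolding n_def by auto
  have less: "\<And>m. m < n \<Longrightarrow> (m \<in> L) = (m \<in> L')"
    using not_less_Least[of _ "\<lambda>k. k \<in> L' - L"] sub unfolding n_def by blast
  show ?thesis unfolding lexless_def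
  proof (intro exI conjI allI impI)
    fix m assume "m < n"
    then show "cp L m = cp L' m" unfolding cutpath_def using less by (auto intro!: ex_cong)
  next
    show "cp L' n" using n unfolding cutpath_def by auto
  next
    have nA: "n \<in> A" using n L' unfolding cuts_def by auto
    have "(n, m) \<in> r" if "m < n" "m \<in> A" "m \<notin> L" for m
    proof -
      have "m \<notin> L'" using less that by auto
      then have "(m, n) \<notin> r" using L' n that(2) unfolding cuts_def by auto
      moreover have "m \<noteq> n" using that by auto
      ultimately show ?thesis using tot[OF that(2) nA] by auto
    qed
    then show "\<not> cp L n" using n nA unfolding cutpath_def by auto
  qed
qed

lemma cut_lex_iff: assumes L: "L \<in> C" and L': "L' \<in> C" shows "lexless (cp L) (cp L') \<longleftrightarrow> L \<subset> L'"
proof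
  assume lx: "lexless (cp L) (cp L')"
  show "L \<subset> L'"
  proof (rule ccontr)
    assume "\<not> L \<subset> L'"
    then have "L' \<subseteq> L" using cut_lin[OF L L'] by auto
    then consider "L' = L" | "L' \<subset> L" by auto
    then show False
    proof cases
      case 1 then show False using lx lexless_irrefl by auto
    next
      case 2 then show False using cut_order[OF L' L] lx lexless_asym by auto
    qed
  qed
qed (rule cut_order[OF L L'])

lemma cp_inj: "inj_on cp C"
proof (rule inj_onI)
  fix L L' assume L: "L \<in> C" and L': "L' \<in> C" and e: "cp L = cp L'"
  show "L = L'"
  proof (rule ccontr)
    assume "L \<noteq> L'"
    then have "L \<subset> L' \<or> L' \<subset> L" using cut_lin[OF L L'] by auto
    then show False using cut_order[OF L L'] cut_order[OF L' L] e lexless_irrefl by auto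
  qed
qed

lemma below_sub: "below r a \<subseteq> A"
  unfolding below_def using sub by auto

lemma below_cut: "below r a \<in> C"
  unfolding cuts_def below_def using sub tr by blast

lemma cp_below_a: "a \<in> A \<Longrightarrow> \<not> cp (below r a) a"
  unfolding cutpath_def below_def using irr tot by auto

lemma ext_lab: "a \<in> A \<Longrightarrow> ext_ones (lab A r a) = cp (below r a)"
proof
  fix n assume a: "a \<in> A"
  show "ext_ones (lab A r a) n = cp (below r a) n"
  proof (cases "n < Suc a")
    case True then show ?thesis by (simp add: ext_ones_less lab_def del: upt_Suc)
  next
    case False
    then have "a < n" by auto
    then have "cp (below r a) n" using a irr unfolding cutpath_def below_def by auto
    then show ?thesis using False by (simp add: ext_ones_ge lab_def)
  qed
qed

lemma lab_path: "a \<in> A \<Longrightarrow> ext_ones (lab A r a) \<in> paths T"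
  using ext_lab cp_path below_cut by auto

lemma lab_T: "a \<in> A \<Longrightarrow> lab A r a \<in> T"
  using prefix_T[OF cp_path[OF below_cut], of a "Suc a"] unfolding lab_def by auto

lemma below_psub: "a \<in> A \<Longrightarrow> b \<in> A \<Longrightarrow> below r a \<subset> below r b \<longleftrightarrow> (a, b) \<in> r"
  unfolding below_def using tr irr tot by blast

lemma prop3: "a \<in> A \<Longrightarrow> b \<in> A \<Longrightarrow> (a, b) \<in> r \<longleftrightarrow> lexless (ext_ones (lab A r a)) (ext_ones (lab A r b))"
  using ext_lab cut_lex_iff below_cut below_psub by auto

lemma prop1: assumes s: "\<sigma> \<in> T" shows "(\<sigma> \<noteq> [] \<and> \<not> last \<sigma>) \<longleftrightarrow> (\<exists>a\<in>A. \<sigma> = lab A r a)"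
proof
  assume "\<exists>a\<in>A. \<sigma> = lab A r a"
  then obtain a where a: "a \<in> A" "\<sigma> = lab A r a" by auto
  then show "\<sigma> \<noteq> [] \<and> \<not> last \<sigma>" using cp_below_a[OF a(1)] by (simp add: lab_def)
next
  assume h: "\<sigma> \<noteq> [] \<and> \<not> last \<sigma>"
  define n where "n = length \<sigma> - 1"
  define X where "X = ext_ones \<sigma>"
  have nl: "n < length \<sigma>" "length \<sigma> = Suc n" using h unfolding n_def by auto
  have ln: "last \<sigma> = \<sigma> ! n" using h unfolding n_def by (rule last_conv_nth[OF conjunct1])
  have Xn: "\<not> X n" unfolding X_def ext_ones_less[OF nl(1)] using h ln by simp
  have P: "X \<in> paths T" using ext_ones_path[OF s] unfolding X_def .
  have nA: "n \<in> A" using path_D[OF P Xn] unfolding Zf_def by auto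
  have "Lof X = below r n"
  proof (intro set_eqI iffI)
    fix a assume "a \<in> Lof X" then show "a \<in> below r n" using Xn unfolding Lof_def below_def by auto
  next
    fix a assume an: "a \<in> below r n"
    have "(a, k) \<in> r" if k: "\<not> X k" for k
    proof -
      have "k < length \<sigma>" using k ext_ones_ge unfolding X_def by (metis not_le)
      then have "k = n \<or> k < n" using nl by auto
      then show ?thesis
        using zeros_dec[OF P k Xn] an tr unfolding below_def by auto
    qed
    then show "a \<in> Lof X" using an sub unfolding Lof_def below_def by auto
  qed
  then have e: "ext_ones \<sigma> = cp (below r n)" using path_eq[OF P] unfolding X_def by simp
  have "\<sigma> = lab A r n"
  proof (rule nth_equalityI)
    show "length \<sigma> = length (lab A r n)" using nl by (simp add: lab_def)
    fix i assume i: "i < length \<sigma>"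
    have "\<sigma> ! i = ext_ones \<sigma> i" using i by (simp add: ext_ones_less)
    also have "\<dots> = cp (below r n) i" using e by simp
    also have "\<dots> = lab A r n ! i" using i nl by (simp add: lab_def del: upt_Suc)
    finally show "\<sigma> ! i = lab A r n ! i" .
  qed
  then show "\<exists>a\<in>A. \<sigma> = lab A r a" using nA by auto
qed

lemma insert_cut: "a \<in> A \<Longrightarrow> insert a (below r a) \<in> C"
  unfolding cuts_def below_def using sub tr by blast

lemma prop4: assumes Y: "Y \<in> paths T"
  shows "(\<exists>a\<in>A. Y = ext_ones (lab A r a)) \<longleftrightarrow> has_succ (paths T) Y"
proof -
  obtain L where L: "L \<in> C" "Y = cp L" using Y paths_eq by auto
  show ?thesis
  proof
    assume "\<exists>a\<in>A. Y = ext_ones (lab A r a)"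
    then obtain a where a: "a \<in> A" "Y = cp (below r a)" using ext_lab by auto
    have Lb: "L = below r a" using cp_inj L a below_cut unfolding inj_on_def by auto
    let ?M = "insert a (below r a)"
    have M: "?M \<in> C" using insert_cut a by auto
    have "below r a \<subset> ?M" using irr unfolding below_def by auto
    then have lx: "lexless Y (cp ?M)" using cut_lex_iff[OF below_cut M] a by auto
    have nw: "\<not> (\<exists>W\<in>paths T. lexless Y W \<and> lexless W (cp ?M))"
    proof
      assume "\<exists>W\<in>paths T. lexless Y W \<and> lexless W (cp ?M)"
      then obtain N where N: "N \<in> C" "lexless Y (cp N)" "lexless (cp N) (cp ?M)" using paths_eq by auto
      then have "below r a \<subset> N" "N \<subset> ?M" using cut_lex_iff[OF below_cut N(1)] cut_lex_iff[OF N(1) M] a by auto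
      then show False by blast
    qed
    show "has_succ (paths T) Y" unfolding has_succ_def using lx nw cp_path[OF M] by blast
  next
    assume "has_succ (paths T) Y"
    then obtain Zp where Zp: "Zp \<in> paths T" "lexless Y Zp" "\<not> (\<exists>W\<in>paths T. lexless Y W \<and> lexless W Zp)"
      unfolding has_succ_def by auto
    obtain L' where L': "L' \<in> C" "Zp = cp L'" using Zp paths_eq by auto
    have LL: "L \<subset> L'" using cut_lex_iff[OF L(1) L'(1)] L L' Zp by auto
    then obtain a where a: "a \<in> L'" "a \<notin> L" by auto
    have aA: "a \<in> A" using a L' unfolding cuts_def by auto
    have s1: "L \<subseteq> below r a" using cut_below[OF L(1) _ aA a(2)] unfolding below_def by auto
    have s2: "below r a \<subset> L'" using a L' irr sub unfolding cuts_def below_def by auto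
    have "L = below r a"
    proof (rule ccontr)
      assume "L \<noteq> below r a"
      then have "L \<subset> below r a" using s1 by auto
      then have "lexless Y (cp (below r a)) \<and> lexless (cp (below r a)) Zp"
        using cut_lex_iff below_cut L L' s2 by auto
      then show False using Zp(3) cp_path[OF below_cut] by blast
    qed
    then show "\<exists>a\<in>A. Y = ext_ones (lab A r a)" using L aA ext_lab by auto
  qed
qed

lemma iso_cp: "ord_iso C psub (paths T) lex_rel"
  unfolding ord_iso_def
  by (rule exI[of _ cp]) (auto simp: bij_betw_def cp_inj paths_eq psub_def lex_rel_def cut_lex_iff)

lemma iso_succ: "ord_iso A r (Succs (paths T)) lex_rel"
  unfolding ord_iso_def
proof (rule exI[of _ "\<lambda>a. ext_ones (lab A r a)"], intro conjI ballI)
  show "bij_betw (\<lambda>a. ext_ones (lab A r a)) A (Succs (paths T))"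
    unfolding bij_betw_def
  proof
    show "inj_on (\<lambda>a. ext_ones (lab A r a)) A"
      by (rule inj_onI) (metis prop3 tot lexless_irrefl)
    show "(\<lambda>a. ext_ones (lab A r a)) ` A = Succs (paths T)"
      unfolding Succs_def using prop4 lab_path by blast
  qed
next
  fix x y assume "x \<in> A" "y \<in> A"
  then show "((x, y) \<in> r) = ((ext_ones (lab A r x), ext_ones (lab A r y)) \<in> lex_rel)"
    using prop3 unfolding lex_rel_def by auto
qed

end

lemma ord_iso_sym: "ord_iso A r B s \<Longrightarrow> ord_iso B s A r"
  unfolding ord_iso_def
proof (elim exE conjE, intro exI conjI ballI)
  fix f assume b: "bij_betw f A B" and o: "\<forall>x\<in>A. \<forall>y\<in>A. ((x, y) \<in> r) = ((f x, f y) \<in> s)"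
  show "bij_betw (inv_into A f) B A" using b by (rule bij_betw_inv_into)
  fix x y assume xy: "x \<in> B" "y \<in> B"
  have ix: "inv_into A f x \<in> A" "inv_into A f y \<in> A"
    using bij_betw_inv_into[OF b] xy by (auto simp: bij_betw_def)
  have fx: "f (inv_into A f x) = x" "f (inv_into A f y) = y"
    using xy b by (auto simp: bij_betw_def f_inv_into_f)
  show "((x, y) \<in> s) = ((inv_into A f x, inv_into A f y) \<in> r)"
    using o ix fx by metis
qed

lemma ord_iso_trans: "ord_iso A r B s \<Longrightarrow> ord_iso B s C t \<Longrightarrow> ord_iso A r C t"
  unfolding ord_iso_def
proof (elim exE conjE, intro exI conjI ballI)
  fix f g assume b: "bij_betw f A B" and o: "\<forall>x\<in>A. \<forall>y\<in>A. ((x, y) \<in> r) = ((f x, f y) \<in> s)"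
    and b2: "bij_betw g B C" and o2: "\<forall>x\<in>B. \<forall>y\<in>B. ((x, y) \<in> s) = ((g x, g y) \<in> t)"
  show "bij_betw (g \<circ> f) A C" using b b2 by (rule bij_betw_trans)
  fix x y assume "x \<in> A" "y \<in> A"
  then show "((x, y) \<in> r) = (((g \<circ> f) x, (g \<circ> f) y) \<in> t)"
    using o o2 b by (auto simp: bij_betw_def)
qed

lemma inj_on_sub_iff: assumes "inj_on f A" "L \<subseteq> A" "L' \<subseteq> A"
  shows "(f ` L \<subseteq> f ` L') = (L \<subseteq> L')"
proof
  assume h: "f ` L \<subseteq> f ` L'"
  show "L \<subseteq> L'"
  proof
    fix x assume "x \<in> L"
    then obtain y where "y \<in> L'" "f x = f y" using h by blast
    then show "x \<in> L'" using assms \<open>x \<in> L\<close> unfolding inj_on_def by blast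
  qed
qed auto

lemma iso_cuts: assumes lA: "lin A r" and lB: "lin B s" and i: "ord_iso A r B s"
  shows "ord_iso (cuts A r) psub (cuts B s) psub"
proof -
  from i obtain f where b: "bij_betw f A B" and o: "\<forall>x\<in>A. \<forall>y\<in>A. ((x, y) \<in> r) = ((f x, f y) \<in> s)"
    unfolding ord_iso_def by auto
  have inj: "inj_on f A" and im: "f ` A = B" using b by (auto simp: bij_betw_def)
  have img: "f ` L \<in> cuts B s" if L: "L \<in> cuts A r" for L
  proof -
    have LA: "L \<subseteq> A" using L unfolding cuts_def by auto
    show ?thesis unfolding cuts_def
    proof (intro CollectI conjI ballI impI)
      show "f ` L \<subseteq> B" using LA im by auto
      fix x y assume x: "x \<in> f ` L" and y: "y \<in> B" and "(y, x) \<in> s"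
      then obtain x' y' where "x' \<in> L" "y' \<in> A" "x = f x'" "y = f y'" using im by auto
      then show "y \<in> f ` L" using o L LA \<open>(y, x) \<in> s\<close> unfolding cuts_def by blast
    qed
  qed
  have sur: "M \<in> image f ` cuts A r" if M: "M \<in> cuts B s" for M
  proof -
    let ?L = "{x \<in> A. f x \<in> M}"
    have "\<forall>x\<in>?L. \<forall>y\<in>A. (y, x) \<in> r \<longrightarrow> y \<in> ?L"
    proof (intro ballI impI)
      fix x y assume x: "x \<in> ?L" and y: "y \<in> A" and yx: "(y, x) \<in> r"
      have "(f y, f x) \<in> s" using o x y yx by auto
      moreover have "f y \<in> B" using y im by auto
      ultimately have "f y \<in> M" using M x unfolding cuts_def by auto
      then show "y \<in> ?L" using y by auto
    qed
    then have "?L \<in> cuts A r" unfolding cuts_def by auto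
    moreover have "f ` ?L = M"
    proof
      show "f ` ?L \<subseteq> M" by auto
      show "M \<subseteq> f ` ?L"
      proof
        fix y assume "y \<in> M"
        then have "y \<in> f ` A" using M im unfolding cuts_def by auto
        then obtain x where "x \<in> A" "y = f x" by auto
        then show "y \<in> f ` ?L" using \<open>y \<in> M\<close> by auto
      qed
    qed
    ultimately show ?thesis by blast
  qed
  have injc: "inj_on (image f) (cuts A r)"
  proof (rule inj_onI)
    fix L L' assume "L \<in> cuts A r" "L' \<in> cuts A r" "f ` L = f ` L'"
    moreover have "L \<subseteq> A" "L' \<subseteq> A" using calculation unfolding cuts_def by auto
    ultimately show "L = L'" using inj_on_image_eq_iff[OF inj] by auto
  qed
  show ?thesis unfolding ord_iso_def
  proof (rule exI[of _ "image f"], intro conjI ballI)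
    show "bij_betw (image f) (cuts A r) (cuts B s)"
      unfolding bij_betw_def using injc img sur by blast
    fix L L' assume "L \<in> cuts A r" "L' \<in> cuts A r"
    then have "L \<subseteq> A" "L' \<subseteq> A" unfolding cuts_def by auto
    then show "((L, L') \<in> psub) = ((f ` L, f ` L') \<in> psub)"
      unfolding psub_def using inj_on_sub_iff[OF inj] inj_on_image_eq_iff[OF inj] by (simp add: psubset_eq)
  qed
qed

lemma iso_Succs: assumes i: "ord_iso P lex_rel Q lex_rel"
  shows "ord_iso (Succs P) lex_rel (Succs Q) lex_rel"
proof -
  from i obtain f where b: "bij_betw f P Q" and o: "\<forall>x\<in>P. \<forall>y\<in>P. lexless x y = lexless (f x) (f y)"
    unfolding ord_iso_def lex_rel_def by auto
  have im: "f ` P = Q" and inj: "inj_on f P" using b by (auto simp: bij_betw_def)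
  have hs_iff: "has_succ P Y \<longleftrightarrow> has_succ Q (f Y)" if Y: "Y \<in> P" for Y
  proof
    assume "has_succ P Y"
    then obtain Zp where Zp: "Zp \<in> P" "lexless Y Zp" "\<not> (\<exists>W\<in>P. lexless Y W \<and> lexless W Zp)"
      unfolding has_succ_def by auto
    have "\<not> (\<exists>W\<in>Q. lexless (f Y) W \<and> lexless W (f Zp))"
    proof
      assume "\<exists>W\<in>Q. lexless (f Y) W \<and> lexless W (f Zp)"
      then obtain W where W: "W \<in> P" "lexless (f Y) (f W)" "lexless (f W) (f Zp)" using im by auto
      then show False using Zp Y o by auto
    qed
    then show "has_succ Q (f Y)" unfolding has_succ_def using Zp Y o im by auto
  next
    assume "has_succ Q (f Y)"
    then obtain Zq where Zq: "Zq \<in> Q" "lexless (f Y) Zq" "\<not> (\<exists>W\<in>Q. lexless (f Y) W \<and> lexless W Zq)"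
      unfolding has_succ_def by auto
    obtain Zp where Zp: "Zp \<in> P" "Zq = f Zp" using Zq im by auto
    have "\<not> (\<exists>W\<in>P. lexless Y W \<and> lexless W Zp)"
    proof
      assume "\<exists>W\<in>P. lexless Y W \<and> lexless W Zp"
      then obtain W where W: "W \<in> P" "lexless Y W" "lexless W Zp" by auto
      then show False using Zq Zp Y o im by auto
    qed
    then show "has_succ P Y" unfolding has_succ_def using Zp Zq Y o by auto
  qed
  show ?thesis unfolding ord_iso_def
  proof (rule exI[of _ f], intro conjI ballI)
    show "bij_betw f (Succs P) (Succs Q)"
      unfolding bij_betw_def
    proof
      show "inj_on f (Succs P)" using inj unfolding Succs_def by (rule inj_on_subset) auto
      show "f ` Succs P = Succs Q" unfolding Succs_def using hs_iff im by auto
    qed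
    fix x y assume "x \<in> Succs P" "y \<in> Succs P"
    then show "((x, y) \<in> lex_rel) = ((f x, f y) \<in> lex_rel)" using o unfolding Succs_def lex_rel_def by auto
  qed
qed

inductive_cases ZeroE: "eval X Zero xs y"
inductive_cases SuccE: "eval X Succ xs y"
inductive_cases ProjE: "eval X (Proj i) xs y"
inductive_cases OrcE: "eval X Orc xs y"
inductive_cases CompE: "eval X (Comp f gs) xs y"
inductive_cases PrecE: "eval X (Prec f g) xs y"
inductive_cases MnE: "eval X (Mn f) xs y"

lemma eval_det: "eval X e xs y \<Longrightarrow> eval X e xs y' \<Longrightarrow> y = y'"
proof (induction arbitrary: y' rule: eval.induct)
  case (eval_Zero xs) then show ?case by (auto elim: ZeroE)
next
  case (eval_Succ x xs) then show ?case by (auto elim: SuccE)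
next
  case (eval_Proj i xs) then show ?case by (auto elim: ProjE)
next
  case (eval_Orc x xs) then show ?case by (auto elim: OrcE)
next
  case (eval_Comp ys gs xs f z)
  from eval_Comp.prems obtain ys' where l: "length ys' = length gs"
    and e: "\<forall>i<length gs. eval X (gs ! i) xs (ys' ! i)" and ef: "eval X f ys' y'"
    by (auto elim: CompE)
  note H = eval_Comp(3)
  have "ys ! i = ys' ! i" if "i < length gs" for i
  proof -
    from H that have "\<forall>x. eval X (gs ! i) xs x \<longrightarrow> ys ! i = x" by auto
    with e that show ?thesis by auto
  qed
  then have "ys = ys'"
    by (intro nth_equalityI) (use l eval_Comp(1) in auto)
  then show ?case using eval_Comp(4) ef by auto
next
  case (eval_Prec0 f xs y g) from eval_Prec0.prems show ?case by (auto elim: PrecE intro: eval_Prec0.IH)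
next
  case (eval_PrecS f g n xs y z)
  from eval_PrecS.prems obtain y2 where "eval X (Prec f g) (n # xs) y2" "eval X g (y2 # n # xs) y'"
    by (auto elim: PrecE)
  then show ?case using eval_PrecS.IH by metis
next
  case (eval_Mn f n xs)
  from eval_Mn.prems have a: "eval X f (y' # xs) 0" and b: "\<forall>m<y'. \<exists>y>0. eval X f (m # xs) y"
    by (auto elim: MnE)
  show ?case
  proof (rule ccontr)
    assume "n \<noteq> y'"
    then consider "n < y'" | "y' < n" by arith
    then show False
    proof cases
      case 1
      with b obtain y where "y > 0" "eval X f (n # xs) y" by auto
      with eval_Mn(2) show False by auto
    next
      case 2
      with eval_Mn(3) obtain y where "y \<noteq> 0" "\<forall>x. eval X f (y' # xs) x \<longrightarrow> y = x"
        by auto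
      then show False using a by auto
    qed
  qed
qed

definition tot :: "(nat \<Rightarrow> nat) \<Rightarrow> recf \<Rightarrow> nat \<Rightarrow> (nat list \<Rightarrow> nat) \<Rightarrow> bool" where
  "tot X e n f \<longleftrightarrow> (\<forall>xs. length xs = n \<longrightarrow> eval X e xs (f xs))"

lemma tot_cong: "tot X e n f \<Longrightarrow> (\<And>xs. length xs = n \<Longrightarrow> f xs = g xs) \<Longrightarrow> tot X e n g"
  unfolding tot_def by auto

lemma tot_Zero: "tot X Zero n (\<lambda>_. 0)"
  unfolding tot_def by (auto intro: eval.intros)

lemma tot_Succ: "0 < n \<Longrightarrow> tot X Succ n (\<lambda>xs. Suc (hd xs))"
  unfolding tot_def apply clarify subgoal for xs by (cases xs) (auto intro: eval_Succ) done

lemma tot_Proj: "i < n \<Longrightarrow> tot X (Proj i) n (\<lambda>xs. xs ! i)"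
  unfolding tot_def by (auto intro: eval.intros)

lemma tot_Orc: "0 < n \<Longrightarrow> tot X Orc n (\<lambda>xs. X (hd xs))"
  unfolding tot_def apply clarify subgoal for xs by (cases xs) (auto intro: eval_Orc) done

lemma tot_Comp: "length gs = m \<Longrightarrow> tot X f m F \<Longrightarrow> list_all2 (\<lambda>g h. tot X g n h) gs hs
  \<Longrightarrow> tot X (Comp f gs) n (\<lambda>xs. F (map (\<lambda>h. h xs) hs))"
  unfolding tot_def
proof (intro allI impI)
  fix xs :: "nat list"
  assume a: "length gs = m" "\<forall>xs. length xs = m \<longrightarrow> eval X f xs (F xs)"
    "list_all2 (\<lambda>g h. \<forall>xs. length xs = n \<longrightarrow> eval X g xs (h xs)) gs hs" "length xs = n"
  have l: "length hs = length gs" using a(3) by (simp add: list_all2_lengthD)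
  show "eval X (Comp f gs) xs (F (map (\<lambda>h. h xs) hs))"
  proof (rule eval_Comp[where ys = "map (\<lambda>h. h xs) hs"])
    show "length (map (\<lambda>h. h xs) hs) = length gs" using l by simp
    show "\<forall>i<length gs. eval X (gs ! i) xs (map (\<lambda>h. h xs) hs ! i)"
      using a(3,4) l list_all2_nthD by fastforce
    show "eval X f (map (\<lambda>h. h xs) hs) (F (map (\<lambda>h. h xs) hs))"
      using a(1,2) l by simp
  qed
qed

lemma la2_Nil: "list_all2 P [] []" by simp
lemma la2_Cons: "P x y \<Longrightarrow> list_all2 P xs ys \<Longrightarrow> list_all2 P (x # xs) (y # ys)" by simp

lemma tot_Prec: "tot X f n g \<Longrightarrow> tot X h (Suc (Suc n)) k
  \<Longrightarrow> tot X (Prec f h) (Suc n) (\<lambda>xs. rec_nat (g (tl xs)) (\<lambda>m y. k (y # m # tl xs)) (hd xs))"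
  unfolding tot_def
proof (intro allI impI)
  fix xs :: "nat list"
  assume F: "\<forall>xs. length xs = n \<longrightarrow> eval X f xs (g xs)" and H: "\<forall>xs. length xs = Suc (Suc n) \<longrightarrow> eval X h xs (k xs)"
    and L: "length xs = Suc n"
  then obtain a ys where xs: "xs = a # ys" and ly: "length ys = n" by (cases xs) auto
  have "eval X (Prec f h) (a # ys) (rec_nat (g ys) (\<lambda>m y. k (y # m # ys)) a)"
  proof (induction a)
    case 0 then show ?case using F ly by (auto intro: eval.intros)
  next
    case (Suc a) then show ?case using H ly by (auto intro: eval.intros)
  qed
  then show "eval X (Prec f h) xs (rec_nat (g (tl xs)) (\<lambda>m y. k (y # m # tl xs)) (hd xs))"
    using xs by simp
qed

lemmas R0 = tot_Zero tot_Succ tot_Proj tot_Orc tot_Comp la2_Nil la2_Cons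

definition "ADD = Prec (Proj 0) (Comp Succ [Proj 0])"

lemma rec_add: "rec_nat b (\<lambda>m. Suc) a = a + b" by (induction a) auto

lemma tot_ADD: "n = 2 \<Longrightarrow> tot X ADD n (\<lambda>xs. xs!0 + xs!1)"
proof -
  assume n: "n = 2"
  have "tot X ADD (Suc (Suc 0)) (\<lambda>xs. rec_nat (tl xs ! 0) (\<lambda>m y. Suc y) (hd xs))"
    unfolding ADD_def
    apply (rule tot_cong, rule tot_Prec)
    apply (rule R0 | simp)+
    done
  then show ?thesis unfolding n numeral_2_eq_2
    by (rule tot_cong) (auto simp: length_Suc_conv numeral_2_eq_2 rec_add)
qed


lemmas R1 = R0 tot_ADD

definition "MUL = Prec Zero (Comp ADD [Proj 0, Proj 2])"
lemma rec_mul: "rec_nat 0 (\<lambda>m y. y + x) n = n * x" by (induction n) auto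
lemma tot_MUL: "n = 2 \<Longrightarrow> tot X MUL n (\<lambda>xs. xs!0 * xs!1)"
  unfolding numeral_2_eq_2 MUL_def
  apply (simp, rule tot_cong, rule tot_Prec)
  apply (rule R1 | simp)+
  apply (auto simp: length_Suc_conv rec_mul)
  done

definition "PRED = Prec Zero (Proj 1)"
lemma rec_pred: "rec_nat 0 (\<lambda>m y. m) n = n - 1" by (induction n) auto
lemma tot_PRED: "n = 1 \<Longrightarrow> tot X PRED n (\<lambda>xs. xs!0 - 1)"
  unfolding PRED_def One_nat_def
  apply (simp, rule tot_cong, rule tot_Prec)
  apply (rule R1 | simp)+
  apply (auto simp: length_Suc_conv rec_pred)
  done

definition "ISZ = Prec (Comp Succ [Zero]) Zero"
lemma rec_isz: "rec_nat (Suc 0) (\<lambda>m y. 0) n = of_bool (n = 0)" by (induction n) auto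
lemma tot_ISZ: "n = 1 \<Longrightarrow> tot X ISZ n (\<lambda>xs. of_bool (xs!0 = 0))"
  unfolding ISZ_def One_nat_def
  apply (simp, rule tot_cong, rule tot_Prec)
  apply (rule R1 | simp)+
  apply (auto simp: length_Suc_conv rec_isz)
  done

lemmas R2 = R1 tot_MUL tot_PRED tot_ISZ

definition "NZ = Comp ISZ [ISZ]"
lemma tot_NZ: "n = 1 \<Longrightarrow> tot X NZ n (\<lambda>xs. of_bool (xs!0 \<noteq> 0))"
  unfolding NZ_def
  apply (rule tot_cong)
  apply (rule R2 | simp)+
  done

definition "PAR = Prec Zero (Comp ISZ [Proj 0])"
lemma rec_par: "rec_nat 0 (\<lambda>m y. of_bool (y = 0)) n = of_bool (odd n)" by (induction n) auto
lemma tot_PAR: "n = 1 \<Longrightarrow> tot X PAR n (\<lambda>xs. of_bool (odd (xs!0)))"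
  unfolding PAR_def One_nat_def
  apply (simp, rule tot_cong, rule tot_Prec)
  apply (rule R2 | simp)+
  apply (auto simp: length_Suc_conv rec_par)
  done

lemmas R3 = R2 tot_NZ tot_PAR

definition "DIV2 = Prec Zero (Comp ADD [Proj 0, Comp PAR [Proj 1]])"
lemma rec_div2: "rec_nat 0 (\<lambda>m y. y + of_bool (odd m)) n = n div 2" by (induction n) auto
lemma tot_DIV2: "n = 1 \<Longrightarrow> tot X DIV2 n (\<lambda>xs. xs!0 div 2)"
  unfolding DIV2_def One_nat_def
  apply (simp, rule tot_cong, rule tot_Prec)
  apply (rule R3 | simp)+
  apply (auto simp: length_Suc_conv rec_div2)
  done

definition tl2 :: "nat \<Rightarrow> nat" where "tl2 n = (n - 1) div 2"

definition "TL2 = Comp DIV2 [PRED]"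
lemma tot_TL2: "n = 1 \<Longrightarrow> tot X TL2 n (\<lambda>xs. tl2 (xs!0))"
  unfolding TL2_def tl2_def
  apply (rule tot_cong)
  apply (rule R3 tot_DIV2 | simp)+
  done

definition "ITL = Prec (Proj 0) (Comp TL2 [Proj 0])"
lemma rec_itl: "rec_nat c (\<lambda>m y. tl2 y) n = (tl2 ^^ n) c" by (induction n) auto
lemma tot_ITL: "n = 2 \<Longrightarrow> tot X ITL n (\<lambda>xs. (tl2 ^^ (xs!0)) (xs!1))"
  unfolding ITL_def numeral_2_eq_2
  apply (simp, rule tot_cong, rule tot_Prec)
  apply (rule R3 tot_TL2 | simp)+
  apply (auto simp: length_Suc_conv rec_itl)
  done

definition "POW2 = Prec (Comp Succ [Zero]) (Comp ADD [Proj 0, Proj 0])"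
lemma rec_pow2: "rec_nat (Suc 0) (\<lambda>m y. y + y) n = 2 ^ n" by (induction n) auto
lemma tot_POW2: "n = 1 \<Longrightarrow> tot X POW2 n (\<lambda>xs. 2 ^ (xs!0))"
  unfolding POW2_def One_nat_def
  apply (simp, rule tot_cong, rule tot_Prec)
  apply (rule R3 | simp)+
  apply (auto simp: length_Suc_conv rec_pow2)
  done

definition "TRI = Prec Zero (Comp ADD [Proj 0, Comp Succ [Proj 1]])"
lemma rec_tri: "rec_nat 0 (\<lambda>m y. Suc (y + m)) n = triangle n" by (induction n) auto
lemma tot_TRI: "n = 1 \<Longrightarrow> tot X TRI n (\<lambda>xs. triangle (xs!0))"
  unfolding TRI_def One_nat_def
  apply (simp, rule tot_cong, rule tot_Prec)
  apply (rule R3 | simp)+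
  apply (auto simp: length_Suc_conv rec_tri)
  done

definition "PENC = Comp ADD [Comp TRI [ADD], Proj 0]"
lemma tot_PENC: "n = 2 \<Longrightarrow> tot X PENC n (\<lambda>xs. prod_encode (xs!0, xs!1))"
  unfolding PENC_def prod_encode_def
  apply (rule tot_cong)
  apply (rule R3 tot_TRI | simp)+
  done

definition "AND = Comp MUL [Comp NZ [Proj 0], Comp NZ [Proj 1]]"
lemma tot_AND: "n = 2 \<Longrightarrow> tot X AND n (\<lambda>xs. of_bool (xs!0 \<noteq> 0 \<and> xs!1 \<noteq> 0))"
  unfolding AND_def
  apply (rule tot_cong)
  apply (rule R3 | simp)+
  done

definition "OR = Comp NZ [ADD]"
lemma tot_OR: "n = 2 \<Longrightarrow> tot X OR n (\<lambda>xs. of_bool (xs!0 \<noteq> 0 \<or> xs!1 \<noteq> 0))"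
  unfolding OR_def
  apply (rule tot_cong)
  apply (rule R3 | simp)+
  done

definition "IMP = Comp OR [Comp ISZ [Proj 0], Proj 1]"
lemma tot_IMP: "n = 2 \<Longrightarrow> tot X IMP n (\<lambda>xs. of_bool (xs!0 \<noteq> 0 \<longrightarrow> xs!1 \<noteq> 0))"
  unfolding IMP_def
  apply (rule tot_cong)
  apply (rule R3 tot_OR | simp)+
  done

lemmas R4 = R3 tot_DIV2 tot_TL2 tot_ITL tot_POW2 tot_TRI tot_PENC tot_AND tot_OR tot_IMP

lemma la2_Projs: "list_all2 (\<lambda>g h. tot X g (Suc (Suc k)) h) (map Proj [1..<k+2]) (map (\<lambda>i xs. xs!i) [1..<k+2])"
  by (auto simp: list_all2_conv_all_nth simp del: upt_Suc intro!: tot_Proj)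

lemma map_nth_tl: "length xs = Suc n \<Longrightarrow> map (nth xs) [Suc 0..<Suc n] = tl xs"
  by (rule nth_equalityI) (auto simp: nth_tl simp del: upt_Suc)

definition "BALL P k = Prec (Comp Succ [Zero]) (Comp AND [Proj 0, Comp P (map Proj [1..<k+2])])"
definition "BEX P k = Prec Zero (Comp OR [Proj 0, Comp P (map Proj [1..<k+2])])"

lemma rec_ball: "rec_nat (Suc 0) (\<lambda>m y. of_bool (0 < y \<and> Q m)) n = (of_bool (\<forall>m<n. Q m) :: nat)"
  by (induction n) (auto simp: less_Suc_eq)
lemma rec_bex: "rec_nat 0 (\<lambda>m y. max (of_bool (0 < y)) (of_bool (Q m))) n = (of_bool (\<exists>m<n. Q m) :: nat)"
  by (induction n) (auto simp: less_Suc_eq)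

lemma tot_shift: "tot X P (Suc k) p \<Longrightarrow> tot X (Comp P (map Proj [1..<k+2])) (Suc (Suc k)) (\<lambda>xs. p (tl xs))"
  apply (rule tot_cong, rule tot_Comp[OF _ _ la2_Projs])
  apply (auto simp: map_nth_tl o_def simp del: upt_Suc)
  done

lemma tot_BALL: assumes P: "tot X P (Suc k) p" and n: "n = Suc k" shows
   "tot X (BALL P k) n (\<lambda>xs. of_bool (\<forall>m<hd xs. p (m # tl xs) \<noteq> 0))"
  unfolding BALL_def n
  apply (rule tot_cong, rule tot_Prec)
    apply (rule tot_shift[OF P] R4 | simp del: upt_Suc)+
  apply (simp only: rec_ball)
  apply auto
  done

lemma tot_BEX: assumes P: "tot X P (Suc k) p" and n: "n = Suc k" shows
   "tot X (BEX P k) n (\<lambda>xs. of_bool (\<exists>m<hd xs. p (m # tl xs) \<noteq> 0))"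
  unfolding BEX_def n
  apply (rule tot_cong, rule tot_Prec)
    apply (rule tot_shift[OF P] R4 | simp del: upt_Suc)+
  apply (simp only: rec_bex)
  apply auto
  done

lemmas R5 = tot_BALL tot_BEX R4

definition "inAt e = Comp NZ [Comp Orc [Comp ADD [e, e]]]"
definition "Lrt e1 e2 = Comp NZ [Comp Orc [Comp Succ [Comp ADD [Comp PENC [e1, e2], Comp PENC [e1, e2]]]]]"
definition "oddt m c = Comp PAR [Comp ITL [m, c]]"

definition "E3 = Comp AND [oddt (Proj 0) (Proj 3), Lrt (Proj 0) (Proj 1)]"
definition "E2 = Comp IMP [inAt (Proj 0),
   Comp AND [Comp IMP [oddt (Proj 0) (Proj 2), Lrt (Proj 1) (Proj 0)],
             Comp IMP [Comp ISZ [oddt (Proj 0) (Proj 2)],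
                       Comp OR [Lrt (Proj 0) (Proj 1), Comp (BEX E3 3) [Proj 0, Proj 0, Proj 1, Proj 2]]]]]"
definition "E1 = Comp IMP [Comp AND [Comp NZ [Comp ITL [Proj 0, Proj 1]], oddt (Proj 0) (Proj 1)],
   Comp AND [inAt (Proj 0), Comp (BALL E2 2) [Proj 0, Proj 0, Proj 1]]]"
definition "eT = Comp (BALL E1 1) [Proj 0, Proj 0]"

schematic_goal eT_raw: "tot X eT 1 ?f"
  unfolding eT_def E1_def E2_def E3_def inAt_def Lrt_def oddt_def
  apply (rule R5 | simp)+
  done

definition inAX :: "(nat \<Rightarrow> nat) \<Rightarrow> nat \<Rightarrow> bool" where "inAX X k \<longleftrightarrow> X (k + k) \<noteq> 0"
definition LrX :: "(nat \<Rightarrow> nat) \<Rightarrow> nat \<Rightarrow> nat \<Rightarrow> bool" where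
  "LrX X a b \<longleftrightarrow> X (Suc (prod_encode (a, b) + prod_encode (a, b))) \<noteq> 0"
definition PhiX :: "(nat \<Rightarrow> nat) \<Rightarrow> nat \<Rightarrow> bool" where
  "PhiX X c \<longleftrightarrow> (\<forall>k<c. ((tl2^^k) c \<noteq> 0 \<and> odd ((tl2^^k) c)) \<longrightarrow> (inAX X k \<and>
     (\<forall>m<k. inAX X m \<longrightarrow> ((odd ((tl2^^m) c) \<longrightarrow> LrX X k m) \<and>
        (\<not> odd ((tl2^^m) c) \<longrightarrow> LrX X m k \<or> (\<exists>m'<m. odd ((tl2^^m') c) \<and> LrX X m' m))))))"

lemma tot_eT: "tot X eT 1 (\<lambda>xs. of_bool (PhiX X (hd xs)))"
  apply (rule tot_cong[OF eT_raw])
  apply (clarsimp simp: length_Suc_conv)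
  apply (simp add: PhiX_def inAX_def LrX_def)
  done

definition "Qt = Comp IMP [inAt (Proj 0), Comp IMP [Comp ISZ [Lrt (Proj 0) (Proj 2)], Lrt (Proj 1) (Proj 0)]]"
definition "Pct = Comp ISZ [Comp AND [inAt (Proj 0), Comp AND [Comp ISZ [Lrt (Proj 0) (Proj 1)],
   Comp (BALL Qt 2) [Proj 0, Proj 0, Proj 1]]]]"
definition "BCt = Prec Zero (Comp ADD [Proj 0, Comp MUL [Comp POW2 [Proj 1], Comp Succ [Comp NZ [Comp Pct [Proj 1, Proj 2]]]]])"
definition "el = Comp BCt [Comp Succ [Proj 0], Proj 0]"

definition cpX :: "(nat \<Rightarrow> nat) \<Rightarrow> nat \<Rightarrow> nat \<Rightarrow> bool" where
  "cpX X a i \<longleftrightarrow> \<not> (inAX X i \<and> \<not> LrX X i a \<and> (\<forall>m<i. inAX X m \<longrightarrow> \<not> LrX X m a \<longrightarrow> LrX X i m))"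

schematic_goal Pct_raw: "tot X Pct 2 ?f"
  unfolding Pct_def Qt_def inAt_def Lrt_def
  apply (rule R5 | simp)+
  done

lemma tot_Pct: "n = 2 \<Longrightarrow> tot X Pct n (\<lambda>xs. of_bool (cpX X (xs!1) (xs!0)))"
  apply simp
  apply (rule tot_cong[OF Pct_raw])
  apply (clarsimp simp: length_Suc_conv numeral_2_eq_2)
  apply (simp add: cpX_def inAX_def LrX_def)
  done

lemma bin_code_snoc: "bin_code (xs @ [b]) = bin_code xs + 2 ^ length xs * (if b then 2 else 1)"
  by (induction xs) auto

lemma rec_bc: "rec_nat 0 (\<lambda>N y. y + (2 ^ N + 2 ^ N * of_bool (P N))) n = bin_code (map P [0..<n])"
  by (induction n) (auto simp: bin_code_snoc)

lemma tot_BCt: "n = 2 \<Longrightarrow> tot X BCt n (\<lambda>xs. bin_code (map (cpX X (xs!1)) [0..<xs!0]))"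
  unfolding BCt_def numeral_2_eq_2
  apply (simp, rule tot_cong, rule tot_Prec)
  apply (rule R5 tot_Pct | simp)+
  apply (auto simp: length_Suc_conv rec_bc)
  done

lemma tot_el: "tot X el 1 (\<lambda>xs. bin_code (map (cpX X (hd xs)) [0..<Suc (hd xs)]))"
  unfolding el_def
  apply (rule tot_cong)
  apply (rule R5 tot_BCt | simp)+
  apply (auto simp: length_Suc_conv)
  done

lemma bin_code_inj: "bin_code xs = bin_code ys \<Longrightarrow> xs = ys"
proof (induction xs arbitrary: ys)
  case Nil then show ?case by (cases ys) (auto split: if_splits)
next
  case (Cons b bs)
  then obtain c cs where ys: "ys = c # cs" by (cases ys) (auto split: if_splits)
  with Cons.prems have e: "2 * bin_code bs + (if b then 2 else 1) = 2 * bin_code cs + (if c then 2 else 1)" by simp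
  then have "b = c" by (cases b; cases c) presburger+
  with e have "bin_code bs = bin_code cs" by auto
  then show ?case using Cons.IH ys \<open>b = c\<close> by auto
qed

fun bin_decode :: "nat \<Rightarrow> bool list" where
  "bin_decode n = (if n = 0 then [] else even n # bin_decode ((n - 1) div 2))"

declare bin_decode.simps[simp del]

lemma bin_code_decode: "bin_code (bin_decode n) = n"
proof (induction n rule: bin_decode.induct)
  case (1 n)
  show ?case
  proof (cases "n = 0")
    case True then show ?thesis by (simp add: bin_decode.simps)
  next
    case False
    then have "bin_code (bin_decode n) = 2 * ((n - 1) div 2) + (if even n then 2 else 1)"
      using 1 by (simp add: bin_decode.simps)
    also have "\<dots> = n" using False by presburger
    finally show ?thesis .
  qed
qed

lemma tl2_code: "tl2 (bin_code xs) = bin_code (tl xs)"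
  by (cases xs) (auto simp: tl2_def)

lemma itl_code: "(tl2 ^^ k) (bin_code xs) = bin_code (drop k xs)"
  by (induction k) (auto simp: tl2_code drop_Suc tl_drop)

lemma len_le_code: "length xs \<le> bin_code xs"
  by (induction xs) auto

lemma nz_code: "((tl2 ^^ k) (bin_code xs) \<noteq> 0) \<longleftrightarrow> k < length xs"
proof -
  have "bin_code ys = 0 \<longleftrightarrow> ys = []" for ys by (cases ys) auto
  then show ?thesis by (simp add: itl_code not_le)
qed

lemma odd_code: "k < length xs \<Longrightarrow> odd ((tl2 ^^ k) (bin_code xs)) \<longleftrightarrow> \<not> xs ! k"
  by (simp add: itl_code Cons_nth_drop_Suc[symmetric])

lemma oracle_inA: "inAX (order_oracle A r) k \<longleftrightarrow> k \<in> A"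
  unfolding inAX_def order_oracle_def by simp

lemma oracle_Lr: "LrX (order_oracle A r) a b \<longleftrightarrow> (a, b) \<in> r"
proof -
  have "prod_encode (a, b) \<in> order_code r \<longleftrightarrow> (a, b) \<in> r"
    unfolding order_code_def using inj_prod_encode[of UNIV] by (auto simp: inj_on_def)
  then show ?thesis unfolding LrX_def order_oracle_def by simp
qed

lemma Phi_T: "PhiX (order_oracle A r) (bin_code \<sigma>) \<longleftrightarrow> \<sigma> \<in> TT A r"
proof -
  let ?X = "order_oracle A r"
  let ?c = "bin_code \<sigma>"
  have lc: "length \<sigma> \<le> ?c" by (rule len_le_code)
  have "PhiX ?X ?c \<longleftrightarrow> (\<forall>k<length \<sigma>. \<not> \<sigma> ! k \<longrightarrow> (k \<in> A \<and>
     (\<forall>m<k. m \<in> A \<longrightarrow> ((\<not> \<sigma> ! m \<longrightarrow> (k, m) \<in> r) \<and>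
        (\<sigma> ! m \<longrightarrow> (m, k) \<in> r \<or> (\<exists>m'<m. \<not> \<sigma> ! m' \<and> (m', m) \<in> r))))))"
    unfolding PhiX_def oracle_inA oracle_Lr nz_code
  proof (intro iffI allI impI)
    fix k assume H: "\<forall>k<?c. k < length \<sigma> \<and> odd ((tl2 ^^ k) ?c) \<longrightarrow> k \<in> A \<and>
       (\<forall>m<k. m \<in> A \<longrightarrow> (odd ((tl2 ^^ m) ?c) \<longrightarrow> (k, m) \<in> r) \<and>
         (\<not> odd ((tl2 ^^ m) ?c) \<longrightarrow> (m, k) \<in> r \<or> (\<exists>m'<m. odd ((tl2 ^^ m') ?c) \<and> (m', m) \<in> r)))"
      and k: "k < length \<sigma>" "\<not> \<sigma> ! k"
    have kc: "k < ?c" using k lc by auto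
    have om: "\<And>m. m < k \<Longrightarrow> odd ((tl2 ^^ m) ?c) \<longleftrightarrow> \<not> \<sigma> ! m" using k by (auto simp: odd_code)
    have om': "\<And>m m'. m < k \<Longrightarrow> m' < m \<Longrightarrow> odd ((tl2 ^^ m') ?c) \<longleftrightarrow> \<not> \<sigma> ! m'" using k by (auto simp: odd_code)
    from H kc k have "k \<in> A \<and>
       (\<forall>m<k. m \<in> A \<longrightarrow> (odd ((tl2 ^^ m) ?c) \<longrightarrow> (k, m) \<in> r) \<and>
         (\<not> odd ((tl2 ^^ m) ?c) \<longrightarrow> (m, k) \<in> r \<or> (\<exists>m'<m. odd ((tl2 ^^ m') ?c) \<and> (m', m) \<in> r)))"
      by (auto simp: odd_code)
    then show "k \<in> A \<and> (\<forall>m<k. m \<in> A \<longrightarrow> (\<not> \<sigma> ! m \<longrightarrow> (k, m) \<in> r) \<and>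
        (\<sigma> ! m \<longrightarrow> (m, k) \<in> r \<or> (\<exists>m'<m. \<not> \<sigma> ! m' \<and> (m', m) \<in> r)))"
      using om om' by (metis (no_types, lifting))
  next
    fix k assume H: "\<forall>k<length \<sigma>. \<not> \<sigma> ! k \<longrightarrow> k \<in> A \<and> (\<forall>m<k. m \<in> A \<longrightarrow> (\<not> \<sigma> ! m \<longrightarrow> (k, m) \<in> r) \<and>
        (\<sigma> ! m \<longrightarrow> (m, k) \<in> r \<or> (\<exists>m'<m. \<not> \<sigma> ! m' \<and> (m', m) \<in> r)))"
      and k: "k < ?c" "k < length \<sigma> \<and> odd ((tl2 ^^ k) ?c)"
    have kk: "\<not> \<sigma> ! k" using k by (auto simp: odd_code)
    have om: "\<And>m. m < k \<Longrightarrow> odd ((tl2 ^^ m) ?c) \<longleftrightarrow> \<not> \<sigma> ! m" using k by (auto simp: odd_code)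
    have om': "\<And>m m'. m < k \<Longrightarrow> m' < m \<Longrightarrow> odd ((tl2 ^^ m') ?c) \<longleftrightarrow> \<not> \<sigma> ! m'" using k by (auto simp: odd_code)
    from H k kk have "k \<in> A \<and> (\<forall>m<k. m \<in> A \<longrightarrow> (\<not> \<sigma> ! m \<longrightarrow> (k, m) \<in> r) \<and>
        (\<sigma> ! m \<longrightarrow> (m, k) \<in> r \<or> (\<exists>m'<m. \<not> \<sigma> ! m' \<and> (m', m) \<in> r)))" by auto
    then show "k \<in> A \<and>
       (\<forall>m<k. m \<in> A \<longrightarrow> (odd ((tl2 ^^ m) ?c) \<longrightarrow> (k, m) \<in> r) \<and>
         (\<not> odd ((tl2 ^^ m) ?c) \<longrightarrow> (m, k) \<in> r \<or> (\<exists>m'<m. odd ((tl2 ^^ m') ?c) \<and> (m', m) \<in> r)))"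
      using om om' by (metis (no_types, lifting))
  qed
  also have "\<dots> \<longleftrightarrow> \<sigma> \<in> TT A r" unfolding TT_def Zf_def by simp
  finally show ?thesis .
qed


lemma eval_eT: "eval X eT [c] (of_bool (PhiX X c))"
  using tot_eT[of X] unfolding tot_def by (metis list.sel(1) length_Cons list.size(3) One_nat_def)

lemma tree_eq: "treeR eT (order_oracle A r) = TT A r"
proof (intro set_eqI iffI)
  fix \<sigma> assume "\<sigma> \<in> treeR eT (order_oracle A r)"
  then have "eval (order_oracle A r) eT [bin_code \<sigma>] 1" unfolding treeR_def by simp
  then have "of_bool (PhiX (order_oracle A r) (bin_code \<sigma>)) = (1::nat)" using eval_det eval_eT by metis
  then have "PhiX (order_oracle A r) (bin_code \<sigma>)" by (cases "PhiX (order_oracle A r) (bin_code \<sigma>)") auto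
  then show "\<sigma> \<in> TT A r" using Phi_T by simp
next
  fix \<sigma> assume "\<sigma> \<in> TT A r"
  then have "PhiX (order_oracle A r) (bin_code \<sigma>)" using Phi_T by simp
  then show "\<sigma> \<in> treeR eT (order_oracle A r)" unfolding treeR_def using eval_eT by (metis of_bool_eq(2) mem_Collect_eq)
qed

lemma cpX_eq: "cpX (order_oracle A r) a i = cutpath A r (below r a) i"
  unfolding cpX_def cutpath_def below_def oracle_inA oracle_Lr by simp

lemma eval_el: "eval (order_oracle A r) el [a] (bin_code (lab A r a))"
proof -
  have "eval (order_oracle A r) el [a] (bin_code (map (cpX (order_oracle A r) a) [0..<Suc a]))"
    using tot_el[of "order_oracle A r"] unfolding tot_def by (metis list.sel(1) length_Cons list.size(3) One_nat_def)
  moreover have "map (cpX (order_oracle A r) a) [0..<Suc a] = lab A r a"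
    unfolding lab_def using cpX_eq by (simp del: upt_Suc)
  ultimately show ?thesis by simp
qed

lemma lab_eq: "labR el (order_oracle A r) = lab A r"
proof
  fix a
  show "labR el (order_oracle A r) a = lab A r a"
    unfolding labR_def
  proof (rule the_equality)
    show "eval (order_oracle A r) el [a] (bin_code (lab A r a))" by (rule eval_el)
    fix \<sigma> assume "eval (order_oracle A r) el [a] (bin_code \<sigma>)"
    then have "bin_code \<sigma> = bin_code (lab A r a)" using eval_det eval_el by metis
    then show "\<sigma> = lab A r a" by (rule bin_code_inj)
  qed
qed

lemma comp_set: "computes_set (order_oracle A r) eT (bin_code ` TT A r)"
  unfolding computes_set_def
proof (intro allI conjI impI)
  fix n
  have e: "eval (order_oracle A r) eT [n] (of_bool (PhiX (order_oracle A r) n))" by (rule eval_eT)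
  have iff: "n \<in> bin_code ` TT A r \<longleftrightarrow> PhiX (order_oracle A r) n"
  proof
    assume "n \<in> bin_code ` TT A r"
    then obtain \<sigma> where "\<sigma> \<in> TT A r" "n = bin_code \<sigma>" by auto
    then show "PhiX (order_oracle A r) n" using Phi_T by simp
  next
    assume "PhiX (order_oracle A r) n"
    then have "PhiX (order_oracle A r) (bin_code (bin_decode n))" by (simp add: bin_code_decode)
    then have "bin_decode n \<in> TT A r" using Phi_T by simp
    then show "n \<in> bin_code ` TT A r" using bin_code_decode[of n] by (metis image_eqI)
  qed
  show "n \<in> bin_code ` TT A r \<Longrightarrow> eval (order_oracle A r) eT [n] 1" using e iff by simp
  show "n \<notin> bin_code ` TT A r \<Longrightarrow> eval (order_oracle A r) eT [n] 0" using e iff by simp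
qed

lemma lin_I: "strict_lin_order_on A r \<Longrightarrow> lin A r"
  by (rule lin.intro)

theorem lemma4p3:
  "\<exists>eT el :: recf.
     (\<forall>A r. strict_lin_order_on A r \<longrightarrow>
        (let X = order_oracle A r; T = treeR eT X; l = labR el X in
           computes_set X eT (bin_code ` T)
         \<and> computes_fun_on X el A (bin_code \<circ> l)
         \<and> is_tree T
         \<and> (\<forall>a \<in> A. l a \<in> T)
         \<and> (\<forall>\<sigma> \<in> T. (\<sigma> \<noteq> [] \<and> \<not> last \<sigma>) \<longleftrightarrow> (\<exists>a \<in> A. \<sigma> = l a))
         \<and> (\<forall>a \<in> A. ext_ones (l a) \<in> paths T)
         \<and> (\<forall>a \<in> A. \<forall>b \<in> A. (a, b) \<in> r \<longleftrightarrow> lexless (ext_ones (l a)) (ext_ones (l b)))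
         \<and> (\<forall>Y \<in> paths T. (\<exists>a \<in> A. Y = ext_ones (l a)) \<longleftrightarrow>
              (\<exists>Z \<in> paths T. lexless Y Z \<and> \<not> (\<exists>W \<in> paths T. lexless Y W \<and> lexless W Z)))))
   \<and> (\<forall>A r B s. strict_lin_order_on A r \<longrightarrow> strict_lin_order_on B s \<longrightarrow>
        ord_iso A r B s \<longrightarrow>
        ord_iso (paths (treeR eT (order_oracle A r))) lex_rel
                (paths (treeR eT (order_oracle B s))) lex_rel)
   \<and> (\<forall>A r B s. strict_lin_order_on A r \<longrightarrow> strict_lin_order_on B s \<longrightarrow>
        (ord_iso A r B s \<longleftrightarrow>
         ord_iso (paths (treeR eT (order_oracle A r))) lex_rel
                 (paths (treeR eT (order_oracle B s))) lex_rel))"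
proof (rule exI[of _ eT], rule exI[of _ el], intro conjI allI impI)
  fix A r assume lo: "strict_lin_order_on A r"
  interpret lin A r using lo by (rule lin_I)
  show "let X = order_oracle A r; T = treeR eT X; l = labR el X in
           computes_set X eT (bin_code ` T)
         \<and> computes_fun_on X el A (bin_code \<circ> l)
         \<and> is_tree T
         \<and> (\<forall>a \<in> A. l a \<in> T)
         \<and> (\<forall>\<sigma> \<in> T. (\<sigma> \<noteq> [] \<and> \<not> last \<sigma>) \<longleftrightarrow> (\<exists>a \<in> A. \<sigma> = l a))
         \<and> (\<forall>a \<in> A. ext_ones (l a) \<in> paths T)
         \<and> (\<forall>a \<in> A. \<forall>b \<in> A. (a, b) \<in> r \<longleftrightarrow> lexless (ext_ones (l a)) (ext_ones (l b)))
         \<and> (\<forall>Y \<in> paths T. (\<exists>a \<in> A. Y = ext_ones (l a)) \<longleftrightarrow>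
              (\<exists>Z \<in> paths T. lexless Y Z \<and> \<not> (\<exists>W \<in> paths T. lexless Y W \<and> lexless W Z)))"
    unfolding Let_def tree_eq lab_eq
  proof (intro conjI)
    show "computes_set (order_oracle A r) eT (bin_code ` TT A r)" by (rule comp_set)
    show "computes_fun_on (order_oracle A r) el A (bin_code \<circ> lab A r)"
      unfolding computes_fun_on_def using eval_el by simp
    show "is_tree (TT A r)" by (rule tree)
    show "\<forall>a\<in>A. lab A r a \<in> TT A r" using lab_T by auto
    show "\<forall>\<sigma>\<in>TT A r. (\<sigma> \<noteq> [] \<and> \<not> last \<sigma>) = (\<exists>a\<in>A. \<sigma> = lab A r a)" using prop1 by auto
    show "\<forall>a\<in>A. ext_ones (lab A r a) \<in> paths (TT A r)" using lab_path by auto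
    show "\<forall>a\<in>A. \<forall>b\<in>A. ((a, b) \<in> r) = lexless (ext_ones (lab A r a)) (ext_ones (lab A r b))"
      using prop3 by auto
    show "\<forall>Y\<in>paths (TT A r). (\<exists>a\<in>A. Y = ext_ones (lab A r a)) =
        (\<exists>Z\<in>paths (TT A r). lexless Y Z \<and> \<not> (\<exists>W\<in>paths (TT A r). lexless Y W \<and> lexless W Z))"
      using prop4 unfolding has_succ_def by auto
  qed
next
  fix A r B s assume la: "strict_lin_order_on A r" and lb: "strict_lin_order_on B s" and i: "ord_iso A r B s"
  interpret a: lin A r using la by (rule lin_I)
  interpret b: lin B s using lb by (rule lin_I)
  have "ord_iso (paths (TT A r)) lex_rel (cuts A r) psub" by (rule ord_iso_sym[OF a.iso_cp])
  also have "ord_iso (cuts A r) psub (cuts B s) psub" by (rule iso_cuts[OF lin_I[OF la] lin_I[OF lb] i])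
  then have "ord_iso (paths (TT A r)) lex_rel (cuts B s) psub" using calculation ord_iso_trans by blast
  then have "ord_iso (paths (TT A r)) lex_rel (paths (TT B s)) lex_rel" using b.iso_cp ord_iso_trans by blast
  then show "ord_iso (paths (treeR eT (order_oracle A r))) lex_rel (paths (treeR eT (order_oracle B s))) lex_rel"
    unfolding tree_eq .
next
  fix A r B s assume la: "strict_lin_order_on A r" and lb: "strict_lin_order_on B s"
  interpret a: lin A r using la by (rule lin_I)
  interpret b: lin B s using lb by (rule lin_I)
  have fwd: "ord_iso A r B s \<Longrightarrow> ord_iso (paths (TT A r)) lex_rel (paths (TT B s)) lex_rel"
  proof -
    assume i: "ord_iso A r B s"
    have "ord_iso (paths (TT A r)) lex_rel (cuts B s) psub"
      using ord_iso_sym[OF a.iso_cp] iso_cuts[OF lin_I[OF la] lin_I[OF lb] i] ord_iso_trans by blast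
    then show ?thesis using b.iso_cp ord_iso_trans by blast
  qed
  have bwd: "ord_iso (paths (TT A r)) lex_rel (paths (TT B s)) lex_rel \<Longrightarrow> ord_iso A r B s"
  proof -
    assume i: "ord_iso (paths (TT A r)) lex_rel (paths (TT B s)) lex_rel"
    have "ord_iso A r (Succs (paths (TT B s))) lex_rel"
      using a.iso_succ iso_Succs[OF i] ord_iso_trans by blast
    then show ?thesis using ord_iso_sym[OF b.iso_succ] ord_iso_trans by blast
  qed
  show "ord_iso A r B s = ord_iso (paths (treeR eT (order_oracle A r))) lex_rel (paths (treeR eT (order_oracle B s))) lex_rel"
    unfolding tree_eq using fwd bwd by blast
qed

end
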